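(* Let $S\subseteq[12]$ be such that $\mathsf{MAIS}(G^*_S)<\alpha(G^*_{S,u})$. Then for any valid index code for the problem $\mathcal{B}^*_S$ with locality $1$, whose receivers $u_1,u_2,u_3$ observe codeword symbols indexed by $R_1,R_2,R_3$ respectively, we have $|R_i\cap R_j|=0$ for every $1\le i<j\le3$.
   Context: Index coding model. A unicast index coding problem has receivers $u_1,\dots,u_n$ and messages $\mathbf{x}_j$, each a vector in $\mathcal{A}^m$ for a finite alphabet $\mathcal{A}$ and positive integer $m$. Receiver $u_i$ demands $\mathbf{x}_j$, $j\in W_i$, and knows $\mathbf{x}_j$, $j\in K_i$, with $W_i\cap K_i=\emptyset$, the $W_i$ pairwise disjoint and every message demanded by exactly one receiver. An index code consists of an encoder mapping the messages to a codeword $\mathbf{c}\in\mathcal{A}^\ell$, subsets $R_i\subseteq[\ell]$ (receiver $u_i$ observes only $\mathbf{c}_{R_i}$), and decoders at each $u_i$ mapping $(\mathbf{c}_{R_i},\mathbf{x}_{K_i})$ to $\mathbf{x}_{W_i}$; it is valid if every receiver decodes correctly for all message values. The locality at $u_i$ is $|R_i|/(m|W_i|)$ and the locality of the code is the maximum over receivers (receivers with no demand impose no constraint). The problem $\mathcal{B}^*$ has three receivers and 12 messages with $W_1=\{1,2,3,4\}$, $W_2=\{5,6,7,8\}$, $W_3=\{9,10,11,12\}$, $K_1=\{5,6,9,10\}$, $K_2=\{1,2,9,11\}$, $K_3=\{1,3,5,7\}$. For $S\subseteq[12]$, $\mathcal{B}^*_S$ is the sub-problem with receivers $u_1,u_2,u_3$,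 messages $\mathbf{x}_j$, $j\in S$, demand sets $W_i\cap S$ and side information sets $K_i\cap S$. $G^*$ is the directed graph on $[12]$ with a directed edge $(a,b)$ iff $b\in K_i$ where $a\in W_i$; $G^*_u$ is the undirected graph on $[12]$ with $\{a,b\}$ an edge iff both $(a,b)$ and $(b,a)$ are edges of $G^*$; $G^*_S$, $G^*_{S,u}$ are the subgraphs induced by $S$. $\mathsf{MAIS}(D)$ is the maximum number of vertices of an acyclic induced subgraph of a directed graph $D$; $\alpha$ is the independence number. *)

theory Defs
  imports Complex_Main "HOL-Library.FuncSet"
begin

text \<open>Demand sets W_i and side-information sets K_i (receivers i = 1,2,3).\<close>

definition W :: "nat \<Rightarrow> nat set" where
  "W i = (if i = 1 then {1,2,3,4} else if i = 2 then {5,6,7,8}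
          else if i = 3 then {9,10,11,12} else {})"

definition K :: "nat \<Rightarrow> nat set" where
  "K i = (if i = 1 then {5,6,9,10} else if i = 2 then {1,2,9,11}
          else if i = 3 then {1,3,5,7} else {})"

definition receivers :: "nat set" where
  "receivers = {1,2,3}"

definition Gstar_edge :: "nat \<Rightarrow> nat \<Rightarrow> bool" where
  "Gstar_edge a b \<longleftrightarrow> (\<exists>i\<in>receivers. a \<in> W i \<and> b \<in> K i)"

definition Gstar_u_edge :: "nat \<Rightarrow> nat \<Rightarrow> bool" where
  "Gstar_u_edge a b \<longleftrightarrow> Gstar_edge a b \<and> Gstar_edge b a"

definition Gstar_rel :: "nat set \<Rightarrow> (nat \<times> nat) set" where
  "Gstar_rel V = {(a, b). a \<in> V \<and> b \<in> V \<and> Gstar_edge a b}"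

definition MAIS :: "nat set \<Rightarrow> nat" where
  "MAIS S = Max {card V | V. V \<subseteq> S \<and> acyclic (Gstar_rel V)}"

definition alpha_u :: "nat set \<Rightarrow> nat" where
  "alpha_u S = Max {card V | V. V \<subseteq> S \<and> (\<forall>a\<in>V. \<forall>b\<in>V. \<not> Gstar_u_edge a b)}"

text \<open>A message assignment: x j k is the k-th coordinate (k < m) of message x_j,
  with entries taking values in the alphabet (the type 'a).\<close>
type_synonym 'a msgs = "nat \<Rightarrow> nat \<Rightarrow> 'a"

definition restrict_msgs :: "nat set \<Rightarrow> nat \<Rightarrow> 'a msgs \<Rightarrow> 'a msgs" where
  "restrict_msgs T m x = (\<lambda>j k. if j \<in> T \<and> k < m then x j k else undefined)"

text \<open>Valid index code for B*_S with message length m and code length l: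
  encoder enc maps the messages x_j (j in S) to a codeword c (symbols c t, t in [l]);
  receiver u_i observes c restricted to R_i \<subseteq> [l] and the side information x_j, j in K_i \<inter> S,
  and its decoder dec i must return all demanded messages x_j, j in W_i \<inter> S.\<close>
definition valid_index_code ::
  "nat set \<Rightarrow> nat \<Rightarrow> nat \<Rightarrow> ('a msgs \<Rightarrow> (nat \<Rightarrow> 'a)) \<Rightarrow> (nat \<Rightarrow> nat set)
    \<Rightarrow> (nat \<Rightarrow> (nat \<Rightarrow> 'a) \<Rightarrow> 'a msgs \<Rightarrow> 'a msgs) \<Rightarrow> bool" where
  "valid_index_code S m l enc R dec \<longleftrightarrow>
     (\<forall>i\<in>receivers. R i \<subseteq> {1..l}) \<and>
     (\<forall>x :: 'a msgs. \<forall>i\<in>receivers. \<forall>j\<in>W i \<inter> S. \<forall>k<m.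
        dec i (restrict (enc (restrict_msgs S m x)) (R i)) (restrict_msgs (K i \<inter> S) m x) j k
          = x j k)"

definition locality :: "nat set \<Rightarrow> nat \<Rightarrow> (nat \<Rightarrow> nat set) \<Rightarrow> real" where
  "locality S m R = Max {real (card (R i)) / real (m * card (W i \<inter> S)) | i.
                          i \<in> receivers \<and> W i \<inter> S \<noteq> {}}"

end

theory Submission
  imports Defs
begin

fun rk :: "nat list \<Rightarrow> nat \<Rightarrow> nat" where
  "rk [] a = 0"
| "rk (x # xs) a = (if x = a then 0 else Suc (rk xs a))"

definition indep :: "nat set \<Rightarrow> bool" where
  "indep V \<longleftrightarrow> (\<forall>a\<in>V. \<forall>b\<in>V. \<not> Gstar_u_edge a b)"

lemma edge_tab: "Gstar_edge a b \<longleftrightarrow>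
   (a \<in> {1,2,3,4} \<and> b \<in> {5,6,9,10}) \<or> (a \<in> {5,6,7,8} \<and> b \<in> {1,2,9,11})
   \<or> (a \<in> {9,10,11,12} \<and> b \<in> {1,3,5,7})"
  unfolding Gstar_edge_def receivers_def W_def K_def by auto

lemma acyc_rank:
  assumes "\<forall>a b. (a,b) \<in> r \<longrightarrow> f a < (f b::nat)"
  shows "acyclic r"
proof -
  have "r \<subseteq> inv_image less_than f" using assms by auto
  hence "wf r" using wf_subset wf_inv_image wf_less_than by blast
  thus ?thesis by (rule wf_acyclic)
qed

lemma acyc_by_rank:
  assumes "I \<subseteq> set V" "indep I"
    "\<forall>a\<in>set V. \<forall>b\<in>set V. Gstar_edge a b \<and> \<not> Gstar_edge b a \<longrightarrow> rk xs a < rk xs b"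
  shows "acyclic (Gstar_rel I)"
  apply (rule acyc_rank[where f="rk xs"])
  using assms unfolding Gstar_rel_def indep_def Gstar_u_edge_def by blast

lemma acyc_by_rank2:
  assumes "I \<subseteq> set V"
    "\<forall>a\<in>set V. \<forall>b\<in>set V. Gstar_edge a b \<longrightarrow> rk xs a < rk xs b"
  shows "acyclic (Gstar_rel I)"
  apply (rule acyc_rank[where f="rk xs"])
  using assms unfolding Gstar_rel_def by blast

lemma upto12: "{1..12::nat} = {1,2,3,4,5,6,7,8,9,10,11,12}"
  by (rule set_eqI) (simp, arith)

lemma key_cyc:
  assumes "I \<subseteq> {1..12}" "indep I" "\<not> acyclic (Gstar_rel I)"
  shows "{3,6,11} \<subseteq> I \<or> {2,7,10} \<subseteq> I"
proof (rule ccontr)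
  assume "\<not> ?thesis"
  then obtain x y where xy: "x \<in> {3,6,11}" "x \<notin> I" "y \<in> {2,7,10}" "y \<notin> I" by auto
  have I: "I \<subseteq> {1,2,3,4,5,6,7,8,9,10,11,12} - {x,y}" using assms(1) xy upto12 by auto
  have c3_2: "acyclic (Gstar_rel I)" if "x = 3" "y = 2"
    apply (rule acyc_by_rank[where V="[1,4,5,6,7,8,9,10,11,12]" and xs="[8,12,4,6,10,9,11,5,7,1]"])
    using I that apply auto[1]
    using assms(2) apply simp
    apply (simp add: edge_tab)
    done
  have c3_7: "acyclic (Gstar_rel I)" if "x = 3" "y = 7"
    apply (rule acyc_by_rank[where V="[1,2,4,5,6,8,9,10,11,12]" and xs="[8,12,4,2,6,10,9,11,5,1]"])
    using I that apply auto[1]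
    using assms(2) apply simp
    apply (simp add: edge_tab)
    done
  have c3_10: "acyclic (Gstar_rel I)" if "x = 3" "y = 10"
    apply (rule acyc_by_rank[where V="[1,2,4,5,6,7,8,9,11,12]" and xs="[8,12,4,7,5,6,2,11,9,1]"])
    using I that apply auto[1]
    using assms(2) apply simp
    apply (simp add: edge_tab)
    done
  have c6_2: "acyclic (Gstar_rel I)" if "x = 6" "y = 2"
    apply (rule acyc_by_rank[where V="[1,3,4,5,7,8,9,10,11,12]" and xs="[8,12,4,11,9,10,3,7,5,1]"])
    using I that apply auto[1]
    using assms(2) apply simp
    apply (simp add: edge_tab)
    done
  have c6_7: "acyclic (Gstar_rel I)" if "x = 6" "y = 7"
    apply (rule acyc_by_rank[where V="[1,2,3,4,5,8,9,10,11,12]" and xs="[8,12,4,2,11,9,10,1,3,5]"])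
    using I that apply auto[1]
    using assms(2) apply simp
    apply (simp add: edge_tab)
    done
  have c6_10: "acyclic (Gstar_rel I)" if "x = 6" "y = 10"
    apply (rule acyc_by_rank[where V="[1,2,3,4,5,7,8,9,11,12]" and xs="[8,12,4,11,7,3,1,2,5,9]"])
    using I that apply auto[1]
    using assms(2) apply simp
    apply (simp add: edge_tab)
    done
  have c11_2: "acyclic (Gstar_rel I)" if "x = 11" "y = 2"
    apply (rule acyc_by_rank[where V="[1,3,4,5,6,7,8,9,10,12]" and xs="[8,12,4,3,10,6,5,7,9,1]"])
    using I that apply auto[1]
    using assms(2) apply simp
    apply (simp add: edge_tab)
    done
  have c11_7: "acyclic (Gstar_rel I)" if "x = 11" "y = 7"
    apply (rule acyc_by_rank[where V="[1,2,3,4,5,6,8,9,10,12]" and xs="[8,12,4,2,1,3,10,6,5,9]"])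
    using I that apply auto[1]
    using assms(2) apply simp
    apply (simp add: edge_tab)
    done
  have c11_10: "acyclic (Gstar_rel I)" if "x = 11" "y = 10"
    apply (rule acyc_by_rank[where V="[1,2,3,4,5,6,7,8,9,12]" and xs="[8,12,4,3,7,5,6,1,2,9]"])
    using I that apply auto[1]
    using assms(2) apply simp
    apply (simp add: edge_tab)
    done
  have "acyclic (Gstar_rel I)" using xy(1,3) c3_2 c3_7 c3_10 c6_2 c6_7 c6_10 c11_2 c11_7 c11_10 by auto
  thus False using assms(3) by simp
qed


lemma fin_cards: "finite S \<Longrightarrow> finite {card V | V. V \<subseteq> S \<and> P V}"
  by (rule finite_subset[where B="{..card S}"]) (auto intro: card_mono)

lemma le_Max_cards: "finite S \<Longrightarrow> V \<subseteq> S \<Longrightarrow> P V \<Longrightarrow> card V \<le> Max {card V | V. V \<subseteq> S \<and> P V}"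
  by (rule Max_ge[OF fin_cards]) auto

lemma Max_cards_obtain:
  assumes "finite S" "P {}"
  shows "\<exists>V. V \<subseteq> S \<and> P V \<and> card V = Max {card V | V. V \<subseteq> S \<and> P V}"
proof -
  have "Max {card V | V. V \<subseteq> S \<and> P V} \<in> {card V | V. V \<subseteq> S \<and> P V}"
    by (rule Max_in[OF fin_cards[OF assms(1)]]) (use assms(2) in auto)
  thus ?thesis by auto
qed

lemma swap:
  assumes "S \<subseteq> {1..12}" "I \<subseteq> S" "card I = alpha_u S" "MAIS S < alpha_u S"
    "v \<in> I" "e \<in> S" "e \<notin> I" "acyclic (Gstar_rel (insert e (I - {v})))"
  shows False
proof -
  have fS: "finite S" using assms(1) finite_subset by blast
  hence fI: "finite I" using assms(2) finite_subset by blast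
  have "card I > 0" using fI assms(5) card_gt_0_iff by blast
  hence "card (insert e (I - {v})) = card I"
    using fI assms(5,7) by (simp add: card_Diff_singleton)
  moreover have "card (insert e (I - {v})) \<le> MAIS S"
    unfolding MAIS_def by (rule le_Max_cards[OF fS]) (use assms in auto)
  ultimately show False using assms(3,4) by simp
qed

lemma caseA:
  assumes "S \<subseteq> {1..12}" "MAIS S < alpha_u S" "I \<subseteq> S" "indep I" "card I = alpha_u S"
    and tri: "{3,6,11} \<subseteq> I"
  shows "S \<inter> {1,2,5,7,9,10} = {}"
proof -
  have IS: "I \<subseteq> S" and Icard: "card I = alpha_u S" using assms by auto
  have Isub: "I \<subseteq> {3,4,6,8,11,12}"
  proof
    fix a assume "a \<in> I"
    hence "a \<in> {1,2,3,4,5,6,7,8,9,10,11,12}" using assms(1,3) upto12 by auto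
    moreover have "\<not> Gstar_u_edge a b" if "b \<in> {3,6,11}" for b
      using assms(4) tri that \<open>a \<in> I\<close> unfolding indep_def by blast
    ultimately show "a \<in> {3,4,6,8,11,12}"
      unfolding Gstar_u_edge_def edge_tab by auto
  qed
  have n1: "1 \<notin> S"
  proof
    assume "1 \<in> S"
    have "acyclic (Gstar_rel (insert 1 (I - {6})))"
      apply (rule acyc_by_rank2[where V="[3,11,4,8,12,1]" and xs="[12,8,4,11,3,1]"])
      using Isub apply auto[1]
      apply (simp add: edge_tab)
      done
    moreover have "1 \<notin> I" using Isub by auto
    moreover have "6 \<in> I" using tri by auto
    ultimately show False using swap[OF assms(1) IS Icard assms(2), of 6 1] \<open>1 \<in> S\<close> by blast
  qed
  have n2: "2 \<notin> S"
  proof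
    assume "2 \<in> S"
    have "acyclic (Gstar_rel (insert 2 (I - {6})))"
      apply (rule acyc_by_rank2[where V="[3,11,4,8,12,2]" and xs="[12,8,4,11,2,3]"])
      using Isub apply auto[1]
      apply (simp add: edge_tab)
      done
    moreover have "2 \<notin> I" using Isub by auto
    moreover have "6 \<in> I" using tri by auto
    ultimately show False using swap[OF assms(1) IS Icard assms(2), of 6 2] \<open>2 \<in> S\<close> by blast
  qed
  have n5: "5 \<notin> S"
  proof
    assume "5 \<in> S"
    have "acyclic (Gstar_rel (insert 5 (I - {11})))"
      apply (rule acyc_by_rank2[where V="[3,6,4,8,12,5]" and xs="[12,4,8,3,6,5]"])
      using Isub apply auto[1]
      apply (simp add: edge_tab)
      done
    moreover have "5 \<notin> I" using Isub by auto
    moreover have "11 \<in> I" using tri by auto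
    ultimately show False using swap[OF assms(1) IS Icard assms(2), of 11 5] \<open>5 \<in> S\<close> by blast
  qed
  have n7: "7 \<notin> S"
  proof
    assume "7 \<in> S"
    have "acyclic (Gstar_rel (insert 7 (I - {11})))"
      apply (rule acyc_by_rank2[where V="[3,6,4,8,12,7]" and xs="[12,4,8,3,7,6]"])
      using Isub apply auto[1]
      apply (simp add: edge_tab)
      done
    moreover have "7 \<notin> I" using Isub by auto
    moreover have "11 \<in> I" using tri by auto
    ultimately show False using swap[OF assms(1) IS Icard assms(2), of 11 7] \<open>7 \<in> S\<close> by blast
  qed
  have n9: "9 \<notin> S"
  proof
    assume "9 \<in> S"
    have "acyclic (Gstar_rel (insert 9 (I - {3})))"
      apply (rule acyc_by_rank2[where V="[6,11,4,8,12,9]" and xs="[4,8,12,6,11,9]"])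
      using Isub apply auto[1]
      apply (simp add: edge_tab)
      done
    moreover have "9 \<notin> I" using Isub by auto
    moreover have "3 \<in> I" using tri by auto
    ultimately show False using swap[OF assms(1) IS Icard assms(2), of 3 9] \<open>9 \<in> S\<close> by blast
  qed
  have n10: "10 \<notin> S"
  proof
    assume "10 \<in> S"
    have "acyclic (Gstar_rel (insert 10 (I - {3})))"
      apply (rule acyc_by_rank2[where V="[6,11,4,8,12,10]" and xs="[4,8,12,6,10,11]"])
      using Isub apply auto[1]
      apply (simp add: edge_tab)
      done
    moreover have "10 \<notin> I" using Isub by auto
    moreover have "3 \<in> I" using tri by auto
    ultimately show False using swap[OF assms(1) IS Icard assms(2), of 3 10] \<open>10 \<in> S\<close> by blast
  qed
  show ?thesis using n1 n2 n5 n7 n9 n10 by auto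
qed

lemma caseB:
  assumes "S \<subseteq> {1..12}" "MAIS S < alpha_u S" "I \<subseteq> S" "indep I" "card I = alpha_u S"
    and tri: "{2,7,10} \<subseteq> I"
  shows "S \<inter> {1,3,5,6,9,11} = {}"
proof -
  have IS: "I \<subseteq> S" and Icard: "card I = alpha_u S" using assms by auto
  have Isub: "I \<subseteq> {2,4,7,8,10,12}"
  proof
    fix a assume "a \<in> I"
    hence "a \<in> {1,2,3,4,5,6,7,8,9,10,11,12}" using assms(1,3) upto12 by auto
    moreover have "\<not> Gstar_u_edge a b" if "b \<in> {2,7,10}" for b
      using assms(4) tri that \<open>a \<in> I\<close> unfolding indep_def by blast
    ultimately show "a \<in> {2,4,7,8,10,12}"
      unfolding Gstar_u_edge_def edge_tab by auto
  qed
  have n1: "1 \<notin> S"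
  proof
    assume "1 \<in> S"
    have "acyclic (Gstar_rel (insert 1 (I - {10})))"
      apply (rule acyc_by_rank2[where V="[2,7,4,8,12,1]" and xs="[8,12,4,7,2,1]"])
      using Isub apply auto[1]
      apply (simp add: edge_tab)
      done
    moreover have "1 \<notin> I" using Isub by auto
    moreover have "10 \<in> I" using tri by auto
    ultimately show False using swap[OF assms(1) IS Icard assms(2), of 10 1] \<open>1 \<in> S\<close> by blast
  qed
  have n3: "3 \<notin> S"
  proof
    assume "3 \<in> S"
    have "acyclic (Gstar_rel (insert 3 (I - {10})))"
      apply (rule acyc_by_rank2[where V="[2,7,4,8,12,3]" and xs="[8,12,4,7,3,2]"])
      using Isub apply auto[1]
      apply (simp add: edge_tab)
      done
    moreover have "3 \<notin> I" using Isub by auto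
    moreover have "10 \<in> I" using tri by auto
    ultimately show False using swap[OF assms(1) IS Icard assms(2), of 10 3] \<open>3 \<in> S\<close> by blast
  qed
  have n5: "5 \<notin> S"
  proof
    assume "5 \<in> S"
    have "acyclic (Gstar_rel (insert 5 (I - {2})))"
      apply (rule acyc_by_rank2[where V="[7,10,4,8,12,5]" and xs="[12,4,8,10,7,5]"])
      using Isub apply auto[1]
      apply (simp add: edge_tab)
      done
    moreover have "5 \<notin> I" using Isub by auto
    moreover have "2 \<in> I" using tri by auto
    ultimately show False using swap[OF assms(1) IS Icard assms(2), of 2 5] \<open>5 \<in> S\<close> by blast
  qed
  have n6: "6 \<notin> S"
  proof
    assume "6 \<in> S"
    have "acyclic (Gstar_rel (insert 6 (I - {2})))"
      apply (rule acyc_by_rank2[where V="[7,10,4,8,12,6]" and xs="[12,4,8,10,6,7]"])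
      using Isub apply auto[1]
      apply (simp add: edge_tab)
      done
    moreover have "6 \<notin> I" using Isub by auto
    moreover have "2 \<in> I" using tri by auto
    ultimately show False using swap[OF assms(1) IS Icard assms(2), of 2 6] \<open>6 \<in> S\<close> by blast
  qed
  have n9: "9 \<notin> S"
  proof
    assume "9 \<in> S"
    have "acyclic (Gstar_rel (insert 9 (I - {7})))"
      apply (rule acyc_by_rank2[where V="[2,10,4,8,12,9]" and xs="[8,4,12,2,10,9]"])
      using Isub apply auto[1]
      apply (simp add: edge_tab)
      done
    moreover have "9 \<notin> I" using Isub by auto
    moreover have "7 \<in> I" using tri by auto
    ultimately show False using swap[OF assms(1) IS Icard assms(2), of 7 9] \<open>9 \<in> S\<close> by blast
  qed
  have n11: "11 \<notin> S"
  proof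
    assume "11 \<in> S"
    have "acyclic (Gstar_rel (insert 11 (I - {7})))"
      apply (rule acyc_by_rank2[where V="[2,10,4,8,12,11]" and xs="[8,4,12,2,11,10]"])
      using Isub apply auto[1]
      apply (simp add: edge_tab)
      done
    moreover have "11 \<notin> I" using Isub by auto
    moreover have "7 \<in> I" using tri by auto
    ultimately show False using swap[OF assms(1) IS Icard assms(2), of 7 11] \<open>11 \<in> S\<close> by blast
  qed
  show ?thesis using n1 n3 n5 n6 n9 n11 by auto
qed

lemma comb_main:
  assumes "S \<subseteq> {1..12}" "MAIS S < alpha_u S"
  shows "(S \<inter> {1,2,5,7,9,10} = {} \<and> {3,6,11} \<subseteq> S) \<or> (S \<inter> {1,3,5,6,9,11} = {} \<and> {2,7,10} \<subseteq> S)"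
proof -
  have fS: "finite S" using assms(1) finite_subset by blast
  obtain I where I: "I \<subseteq> S" "\<forall>a\<in>I. \<forall>b\<in>I. \<not> Gstar_u_edge a b" "card I = alpha_u S"
    using Max_cards_obtain[OF fS, of "\<lambda>V. \<forall>a\<in>V. \<forall>b\<in>V. \<not> Gstar_u_edge a b"]
    unfolding alpha_u_def by auto
  have ind: "indep I" using I(2) unfolding indep_def by blast
  have "\<not> acyclic (Gstar_rel I)"
  proof
    assume "acyclic (Gstar_rel I)"
    hence "card I \<le> MAIS S" unfolding MAIS_def by (rule le_Max_cards[OF fS I(1)])
    thus False using I(3) assms(2) by simp
  qed
  hence "{3,6,11} \<subseteq> I \<or> {2,7,10} \<subseteq> I" using key_cyc[OF _ ind] I(1) assms(1) by blast
  thus ?thesis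
  proof
    assume "{3,6,11} \<subseteq> I"
    thus ?thesis using caseA[OF assms I(1) ind I(3)] I(1) by blast
  next
    assume "{2,7,10} \<subseteq> I"
    thus ?thesis using caseB[OF assms I(1) ind I(3)] I(1) by blast
  qed
qed

definition mix :: "nat set \<Rightarrow> nat \<Rightarrow> 'a msgs \<Rightarrow> 'a msgs \<Rightarrow> 'a msgs" where
  "mix T m g z = (\<lambda>j k. if j \<in> T \<and> k < m then g j k else z j k)"

definition Dm :: "nat set \<Rightarrow> nat \<Rightarrow> 'a msgs set" where
  "Dm T m = PiE T (\<lambda>_. PiE {..<m} (\<lambda>_. UNIV))"

lemma rm_cong: "(\<forall>j\<in>T. \<forall>k<m. x j k = y j k) \<Longrightarrow> restrict_msgs T m x = restrict_msgs T m y"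
  unfolding restrict_msgs_def by (intro ext) auto

lemma card_Dm: "finite T \<Longrightarrow> card (Dm T m :: ('a::finite) msgs set) = card (UNIV :: 'a set) ^ (m * card T)"
  unfolding Dm_def by (simp add: card_PiE power_mult)

lemma Dm_eq:
  assumes "g \<in> Dm T m" "g' \<in> Dm T m" "\<forall>j\<in>T. \<forall>k<m. g j k = g' j k"
  shows "g = g'"
proof (rule ext)
  fix j show "g j = g' j"
  proof (cases "j \<in> T")
    case True
    have gj: "g j \<in> PiE {..<m} (\<lambda>_. UNIV)"
      using PiE_mem[OF assms(1)[unfolded Dm_def] True] .
    have gj': "g' j \<in> PiE {..<m} (\<lambda>_. UNIV)"
      using PiE_mem[OF assms(2)[unfolded Dm_def] True] .
    show ?thesis
    proof (rule ext)
      fix k show "g j k = g' j k"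
      proof (cases "k < m")
        case True thus ?thesis using assms(3) \<open>j \<in> T\<close> by blast
      next
        case False
        hence "k \<notin> {..<m}" by simp
        thus ?thesis using PiE_arb[OF gj] PiE_arb[OF gj'] by simp
      qed
    qed
  next
    case False
    thus ?thesis using PiE_arb[OF assms(1)[unfolded Dm_def]] PiE_arb[OF assms(2)[unfolded Dm_def]] by simp
  qed
qed

lemma card_P: "finite A \<Longrightarrow> card (PiE A (\<lambda>_. UNIV :: ('a::finite) set)) = card (UNIV :: 'a set) ^ card A"
  by (simp add: card_PiE)

lemma card_P':
  assumes "finite A" "t \<in> A"
  shows "card (PiE A (\<lambda>i. if i = t then {c} else UNIV :: ('a::finite) set)) = card (UNIV :: 'a set) ^ (card A - 1)"
proof -
  have "card (PiE A (\<lambda>i. if i = t then {c} else UNIV :: 'a set))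
      = (\<Prod>i\<in>A. card (if i = t then {c} else UNIV :: 'a set))"
    using assms(1) by (simp add: card_PiE)
  also have "\<dots> = card (if t = t then {c} else UNIV :: 'a set) * (\<Prod>i\<in>A - {t}. card (if i = t then {c} else UNIV :: 'a set))"
    using assms by (simp add: prod.remove)
  also have "(\<Prod>i\<in>A - {t}. card (if i = t then {c} else UNIV :: 'a set)) = (\<Prod>i\<in>A - {t}. card (UNIV :: 'a set))"
    by (rule prod.cong) auto
  finally show ?thesis using assms by simp
qed

lemma WK_disj: "r \<in> receivers \<Longrightarrow> W r \<inter> K r = {}"
  unfolding receivers_def W_def K_def by auto

lemma WW_disj: "r \<in> receivers \<Longrightarrow> s \<in> receivers \<Longrightarrow> r \<noteq> s \<Longrightarrow> W r \<inter> W s = {}"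
  unfolding receivers_def W_def by auto

context
  fixes S :: "nat set" and m l :: nat
    and enc :: "('a::finite) msgs \<Rightarrow> (nat \<Rightarrow> 'a)"
    and R :: "nat \<Rightarrow> nat set"
    and dec :: "nat \<Rightarrow> (nat \<Rightarrow> 'a) \<Rightarrow> 'a msgs \<Rightarrow> 'a msgs"
  assumes valid: "valid_index_code S m l enc R dec"
    and bound: "\<And>r. r \<in> receivers \<Longrightarrow> W r \<inter> S \<noteq> {} \<Longrightarrow> card (R r) \<le> m * card (W r \<inter> S)"
    and q2: "card (UNIV :: 'a set) \<ge> 2"
    and finS: "finite S"
begin

definition C :: "nat \<Rightarrow> 'a msgs \<Rightarrow> (nat \<Rightarrow> 'a)" where
  "C r x = restrict (enc (restrict_msgs S m x)) (R r)"

lemma dec_ok: "r \<in> receivers \<Longrightarrow> j \<in> W r \<inter> S \<Longrightarrow> k < m \<Longrightarrow>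
    dec r (C r x) (restrict_msgs (K r \<inter> S) m x) j k = x j k"
  using valid unfolding valid_index_code_def C_def by blast

lemma R_fin: "r \<in> receivers \<Longrightarrow> finite (R r)"
  using valid unfolding valid_index_code_def by (meson finite_atLeastAtMost finite_subset)

lemma C_P: "C r x \<in> PiE (R r) (\<lambda>_. UNIV)"
  unfolding C_def by (simp add: restrict_PiE_iff)

lemma side_mix: "r \<in> receivers \<Longrightarrow>
   restrict_msgs (K r \<inter> S) m (mix (W r \<inter> S) m g z) = restrict_msgs (K r \<inter> S) m z"
  using WK_disj[of r] by (intro rm_cong) (auto simp: mix_def)

lemma C_mix_inj:
  assumes r: "r \<in> receivers"
  shows "inj_on (\<lambda>g. C r (mix (W r \<inter> S) m g z)) (Dm (W r \<inter> S) m)"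
proof (rule inj_onI)
  fix g g' assume g: "g \<in> Dm (W r \<inter> S) m" "g' \<in> Dm (W r \<inter> S) m"
    and eq: "C r (mix (W r \<inter> S) m g z) = C r (mix (W r \<inter> S) m g' z)"
  show "g = g'"
  proof (rule Dm_eq[OF g])
    show "\<forall>j\<in>W r \<inter> S. \<forall>k<m. g j k = g' j k"
    proof (intro ballI allI impI)
      fix j k assume jk: "j \<in> W r \<inter> S" "k < m"
      have "g j k = mix (W r \<inter> S) m g z j k" using jk by (simp add: mix_def)
      also have "\<dots> = dec r (C r (mix (W r \<inter> S) m g z)) (restrict_msgs (K r \<inter> S) m (mix (W r \<inter> S) m g z)) j k"
        using dec_ok[OF r jk] by simp
      also have "\<dots> = dec r (C r (mix (W r \<inter> S) m g' z)) (restrict_msgs (K r \<inter> S) m (mix (W r \<inter> S) m g' z)) j k"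
        using eq side_mix[OF r, of g z] side_mix[OF r, of g' z] by simp
      also have "\<dots> = mix (W r \<inter> S) m g' z j k" using dec_ok[OF r jk] by simp
      also have "\<dots> = g' j k" using jk by (simp add: mix_def)
      finally show "g j k = g' j k" .
    qed
  qed
qed

lemma stepA:
  assumes r: "r \<in> receivers" and ne: "W r \<inter> S \<noteq> {}"
    and agree: "\<forall>j\<in>(W r \<union> K r) \<inter> S. \<forall>k<m. x j k = z j k"
  shows "C r x = C r z"
proof -
  define D where "D = (Dm (W r \<inter> S) m :: 'a msgs set)"
  define P where "P = PiE (R r) (\<lambda>_. UNIV :: 'a set)"
  define \<phi> where "\<phi> = (\<lambda>g. C r (mix (W r \<inter> S) m g z))"
  have inj: "inj_on \<phi> D" unfolding \<phi>_def D_def by (rule C_mix_inj[OF r])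
  have fW: "finite (W r \<inter> S)" using finS by simp
  have cD: "card D = card (UNIV :: 'a set) ^ (m * card (W r \<inter> S))" unfolding D_def by (rule card_Dm[OF fW])
  have fP: "finite P" unfolding P_def using R_fin[OF r] by (simp add: finite_PiE)
  have cP: "card P = card (UNIV :: 'a set) ^ card (R r)" unfolding P_def by (rule card_P[OF R_fin[OF r]])
  have "card P \<le> card D" unfolding cP cD
    using bound[OF r ne] q2 by (intro power_increasing) auto
  moreover have sub: "\<phi> ` D \<subseteq> P" unfolding \<phi>_def P_def using C_P by auto
  moreover have "card (\<phi> ` D) = card D" using inj by (simp add: card_image)
  ultimately have "\<phi> ` D = P"
    using card_subset_eq[OF fP sub] card_mono[OF fP sub] by linarith
  moreover have "C r x \<in> P" unfolding P_def by (rule C_P)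
  ultimately obtain g' where g': "g' \<in> D" "\<phi> g' = C r x" by auto
  define g0 where "g0 = restrict (\<lambda>j. restrict (x j) {..<m}) (W r \<inter> S)"
  have g0D: "g0 \<in> D" unfolding g0_def D_def Dm_def by auto
  have sidexz: "restrict_msgs (K r \<inter> S) m x = restrict_msgs (K r \<inter> S) m z"
    using agree by (intro rm_cong) auto
  have "g' = g0"
  proof (rule Dm_eq[OF g'(1)[unfolded D_def] g0D[unfolded D_def]])
    show "\<forall>j\<in>W r \<inter> S. \<forall>k<m. g' j k = g0 j k"
    proof (intro ballI allI impI)
      fix j k assume jk: "j \<in> W r \<inter> S" "k < m"
      have "g' j k = mix (W r \<inter> S) m g' z j k" using jk by (simp add: mix_def)
      also have "\<dots> = dec r (\<phi> g') (restrict_msgs (K r \<inter> S) m (mix (W r \<inter> S) m g' z)) j k"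
        unfolding \<phi>_def using dec_ok[OF r jk] by simp
      also have "\<dots> = dec r (C r x) (restrict_msgs (K r \<inter> S) m x) j k"
        using g'(2) side_mix[OF r, of g' z] sidexz by simp
      also have "\<dots> = x j k" using dec_ok[OF r jk] by simp
      also have "\<dots> = g0 j k" using jk by (simp add: g0_def)
      finally show "g' j k = g0 j k" .
    qed
  qed
  have "C r z = \<phi> g0"
  proof -
    have "restrict_msgs S m z = restrict_msgs S m (mix (W r \<inter> S) m g0 z)"
      using agree by (intro rm_cong) (auto simp: mix_def g0_def)
    thus ?thesis unfolding \<phi>_def C_def by simp
  qed
  thus ?thesis using g'(2) \<open>g' = g0\<close> by simp
qed

lemma stepB:
  assumes r: "r \<in> receivers" and s: "s \<in> receivers" and rs: "r \<noteq> s"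
    and ner: "W r \<inter> S \<noteq> {}" and nes: "W s \<inter> S \<noteq> {}"
    and disj: "W r \<inter> K s \<inter> S = {}"
    and t: "t \<in> R r" "t \<in> R s"
  shows False
proof -
  fix x :: "'a msgs"
  define D where "D = (Dm (W r \<inter> S) m :: 'a msgs set)"
  define c where "c = C s x t"
  define P where "P = PiE (R r) (\<lambda>i. if i = t then {c} else UNIV :: 'a set)"
  define \<phi> where "\<phi> = (\<lambda>g. C r (mix (W r \<inter> S) m g x))"
  have inj: "inj_on \<phi> D" unfolding \<phi>_def D_def by (rule C_mix_inj[OF r])
  have fW: "finite (W r \<inter> S)" using finS by simp
  have cD: "card D = card (UNIV :: 'a set) ^ (m * card (W r \<inter> S))" unfolding D_def by (rule card_Dm[OF fW])
  have fP: "finite P" unfolding P_def using R_fin[OF r] by (simp add: finite_PiE)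
  have cP: "card P = card (UNIV :: 'a set) ^ (card (R r) - 1)" unfolding P_def by (rule card_P'[OF R_fin[OF r] t(1)])
  have pos: "card (R r) > 0" using R_fin[OF r] t(1) card_gt_0_iff by blast
  have "card P < card D" unfolding cP cD
    using bound[OF r ner] q2 pos by (intro power_strict_increasing) auto
  moreover have "\<phi> ` D \<subseteq> P"
  proof
    fix f assume "f \<in> \<phi> ` D"
    then obtain g where g: "g \<in> D" "f = \<phi> g" by auto
    have WW: "W r \<inter> W s = {}" by (rule WW_disj[OF r s rs])
    have "C s (mix (W r \<inter> S) m g x) = C s x"
      by (rule stepA[OF s nes]) (use WW disj in \<open>auto simp: mix_def\<close>)
    moreover have "C r (mix (W r \<inter> S) m g x) t = C s (mix (W r \<inter> S) m g x) t"
      using t by (simp add: C_def)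
    ultimately have "f t = c" unfolding g(2) \<phi>_def c_def by simp
    moreover have "f \<in> PiE (R r) (\<lambda>_. UNIV)" unfolding g(2) \<phi>_def by (rule C_P)
    ultimately show "f \<in> P" unfolding P_def by (auto simp: PiE_iff)
  qed
  hence "card (\<phi> ` D) \<le> card P" using fP card_mono by blast
  moreover have "card (\<phi> ` D) = card D" using inj by (simp add: card_image)
  ultimately show False by simp
qed

end


theorem lemma5:
  fixes S :: "nat set" and m l :: nat
    and enc :: "('a::finite) msgs \<Rightarrow> (nat \<Rightarrow> 'a)"
    and R :: "nat \<Rightarrow> nat set"
    and dec :: "nat \<Rightarrow> (nat \<Rightarrow> 'a) \<Rightarrow> 'a msgs \<Rightarrow> 'a msgs"
  assumes "S \<subseteq> {1..12}"
    and "MAIS S < alpha_u S"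
    and "card (UNIV :: 'a set) \<ge> 2"
    and "m > 0"
    and "valid_index_code S m l enc R dec"
    and "locality S m R = 1"
  shows "\<forall>i j. 1 \<le> i \<and> i < j \<and> j \<le> 3 \<longrightarrow> card (R i \<inter> R j) = 0"
proof -
  have fS: "finite S" using assms(1) finite_subset by blast
  have q2: "card (UNIV :: 'a set) \<ge> 2" using assms(3) .
  define L where "L = {real (card (R i)) / real (m * card (W i \<inter> S)) | i.
                          i \<in> receivers \<and> W i \<inter> S \<noteq> {}}"
  have finL: "finite L"
    by (rule finite_subset[where B="(\<lambda>i. real (card (R i)) / real (m * card (W i \<inter> S))) ` receivers"])
      (auto simp: L_def receivers_def)
  have Lmax: "Max L = 1" using assms(6) unfolding locality_def L_def .
  have bound: "card (R r) \<le> m * card (W r \<inter> S)" if r: "r \<in> receivers" and ne: "W r \<inter> S \<noteq> {}" for r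
  proof -
    have "real (card (R r)) / real (m * card (W r \<inter> S)) \<in> L" using r ne unfolding L_def by blast
    hence le: "real (card (R r)) / real (m * card (W r \<inter> S)) \<le> 1" using Max_ge[OF finL] Lmax by metis
    have "card (W r \<inter> S) > 0" using ne fS by (simp add: card_gt_0_iff)
    hence pos: "real (m * card (W r \<inter> S)) > 0" using assms(4) by simp
    hence "real (card (R r)) \<le> real (m * card (W r \<inter> S))" using le by (simp add: divide_le_eq)
    thus ?thesis by linarith
  qed
  have comb: "(S \<inter> {1,2,5,7,9,10} = {} \<and> {3,6,11} \<subseteq> S) \<or> (S \<inter> {1,3,5,6,9,11} = {} \<and> {2,7,10} \<subseteq> S)"
    by (rule comb_main[OF assms(1,2)])
  have ne: "W r \<inter> S \<noteq> {}" if "r \<in> receivers" for r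
    using comb that unfolding receivers_def W_def by auto
  have pairs: "W i \<inter> K j \<inter> S = {} \<or> W j \<inter> K i \<inter> S = {}"
    if "i \<in> receivers" "j \<in> receivers" "i \<noteq> j" for i j
    using comb that unfolding receivers_def W_def K_def by auto
  have key: False if "r \<in> receivers" "s \<in> receivers" "r \<noteq> s" "W r \<inter> K s \<inter> S = {}" "t \<in> R r" "t \<in> R s" for r s t
    using stepB[OF assms(5) bound q2 fS that(1,2,3) ne[OF that(1)] ne[OF that(2)] that(4,5,6)] .
  show ?thesis
  proof (intro allI impI)
    fix i j :: nat assume ij: "1 \<le> i \<and> i < j \<and> j \<le> 3"
    hence rec: "i \<in> receivers" "j \<in> receivers" "i \<noteq> j" unfolding receivers_def by auto
    have "R i \<inter> R j = {}"
    proof (rule ccontr)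
      assume "R i \<inter> R j \<noteq> {}"
      then obtain t where "t \<in> R i" "t \<in> R j" by auto
      thus False using pairs[OF rec] key[OF rec(1,2,3)] key[OF rec(2,1)] rec(3) by metis
    qed
    thus "card (R i \<inter> R j) = 0" by simp
  qed
qed


end
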